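(* For every integer $k\ge1$, \[ \sum_{n=1}^\infty\frac{P_k(H_n,H_n^{(2)},\dots,H_n^{(k)})}{(n+2)^2}=\sum_{j=2}^{k+2}\zeta(j)-(k+1). \]
   Context: $H_n^{(r)}=\sum_{t=1}^n t^{-r}$, $H_n=H_n^{(1)}$. For $n\ge1$, $P_n(y_1,\dots,y_n)=\sum_{m_1+2m_2+\cdots=n}\frac{(-1)^{m_2+m_4+\cdots}}{m_1!m_2!\cdots}\prod_{i\ge1}(y_i/i)^{m_i}$ (sum over tuples of nonnegative integers), so that $P_k(H_n,\dots,H_n^{(k)})=\sum_{1\le n_1<\cdots<n_k\le n}\frac{1}{n_1\cdots n_k}$. $\zeta$ is the Riemann zeta function. *)

theory Defs
  imports "HOL-Analysis.Analysis"
begin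

definition gen_harm :: "nat \<Rightarrow> nat \<Rightarrow> real" where
  "gen_harm r n = (\<Sum>t=1..n. 1 / (real t) ^ r)"

definition partition_tuples :: "nat \<Rightarrow> (nat \<Rightarrow> nat) set" where
  "partition_tuples n = {m. (\<forall>i. i \<notin> {1..n} \<longrightarrow> m i = 0) \<and> (\<Sum>i=1..n. i * m i) = n}"

definition P_poly :: "nat \<Rightarrow> (nat \<Rightarrow> real) \<Rightarrow> real" where
  "P_poly n y = (\<Sum>m\<in>partition_tuples n.
      (-1) ^ (\<Sum>i\<in>{i\<in>{1..n}. even i}. m i) / (\<Prod>i=1..n. fact (m i))
      * (\<Prod>i=1..n. (y i / real i) ^ (m i)))"

text \<open>Riemann zeta at integer arguments s >= 2 (where the series converges).\<close>
definition zeta_int :: "nat \<Rightarrow> real" where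
  "zeta_int s = (\<Sum>n. 1 / (real (Suc n)) ^ s)"

end

theory Submission
  imports Defs "HOL-Real_Asymp.Real_Asymp"
begin

fun e :: "nat \<Rightarrow> nat \<Rightarrow> real" where
  "e 0 n = 1"
| "e (Suc k) 0 = 0"
| "e (Suc k) (Suc n) = e (Suc k) n + e k n / real (Suc n)"

fun ep :: "nat \<Rightarrow> nat \<Rightarrow> real" where
  "ep 0 n = 0"
| "ep (Suc k) n = e k n"

lemma e_Suc: "e k (Suc n) = e k n + ep k n / real (Suc n)"
  by (cases k) auto

lemma e_nonneg: "e k n \<ge> 0"
  by (induction k n rule: e.induct) auto

lemma ep_nonneg: "ep k n \<ge> 0"
  by (cases k) (auto simp: e_nonneg)

lemma e_le_harm: "e k n \<le> harm n ^ k"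
proof (induction k n rule: e.induct)
  case (1 n) then show ?case by simp
next
  case (2 k) then show ?case by (simp add: harm_def)
next
  case (3 k n)
  have h: "harm (Suc n) = harm n + 1 / real (Suc n)"
    by (simp add: harm_Suc inverse_eq_divide)
  have hn: "harm n \<ge> (0::real)" by (rule harm_nonneg)
  have "e (Suc k) (Suc n) \<le> harm n ^ Suc k + harm n ^ k / real (Suc n)"
    using 3 by (simp add: divide_right_mono add_mono)
  also have "\<dots> = (harm n + 1 / real (Suc n)) * harm n ^ k"
    by (simp add: algebra_simps)
  also have "\<dots> \<le> (harm n + 1 / real (Suc n)) * (harm n + 1 / real (Suc n)) ^ k"
    by (intro mult_left_mono power_mono) (use hn in auto)
  finally show ?case by (simp add: h)
qed

lemma harm_le_ln: "harm n \<le> 1 + ln (real n + 1)"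
proof -
  have "harm (Suc n) - ln (real (Suc n)) \<le> harm (Suc 0) - ln (real (Suc 0))"
    using decseq_harm_diff_ln unfolding decseq_def by (metis le0 Suc_le_mono)
  hence "harm (Suc n) \<le> 1 + ln (real n + 1)" by (simp add: harm_def add.commute)
  moreover have "harm n \<le> (harm (Suc n) :: real)" by (rule harm_mono) simp
  ultimately show ?thesis by linarith
qed

lemma e_div_lim: "(\<lambda>n. e k n / real (Suc n)) \<longlonglongrightarrow> 0"
proof -
  define z where "z n = 1 + ln (real n + 1)" for n
  have zt: "filterlim z at_top sequentially"
    unfolding z_def by real_asymp
  have lim1: "(\<lambda>n. z n ^ k / exp (z n)) \<longlonglongrightarrow> 0"
    using filterlim_compose[OF tendsto_power_div_exp_0 zt] by simp
  have lim2: "(\<lambda>n. exp 1 * (z n ^ k / exp (z n))) \<longlonglongrightarrow> 0"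
    using tendsto_mult_right_zero[OF lim1] by simp
  show ?thesis
  proof (rule tendsto_sandwich[OF _ _ tendsto_const lim2])
    show "\<forall>\<^sub>F n in sequentially. 0 \<le> e k n / real (Suc n)"
      by (intro always_eventually allI divide_nonneg_nonneg e_nonneg) simp
    show "\<forall>\<^sub>F n in sequentially. e k n / real (Suc n) \<le> exp 1 * (z n ^ k / exp (z n))"
    proof (intro always_eventually allI)
      fix n
      have ez: "exp (z n) = exp 1 * (real n + 1)"
        unfolding z_def by (simp add: exp_add)
      have "e k n \<le> z n ^ k"
        using e_le_harm[of k n] power_mono[OF harm_le_ln[of n] harm_nonneg, of k]
        unfolding z_def by linarith
      hence "e k n / real (Suc n) \<le> z n ^ k / real (Suc n)"
        by (simp add: divide_right_mono)
      also have "\<dots> = exp 1 * (z n ^ k / exp (z n))"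
        by (simp add: ez)
      finally show "e k n / real (Suc n) \<le> exp 1 * (z n ^ k / exp (z n))" .
    qed
  qed
qed


definition C :: "nat \<Rightarrow> nat \<Rightarrow> real" where
  "C n m = fact n * fact m / fact (n + m + 1)"
definition W :: "nat \<Rightarrow> nat \<Rightarrow> real" where
  "W n m = fact n * fact m / fact (n + m + 2)"

lemma fact_n2: "(fact (n + m + 2) :: real) = real (n + m + 2) * fact (n + m + 1)"
proof -
  have "n + m + 2 = Suc (n + m + 1)" by simp
  hence "(fact (n + m + 2) :: real) = fact (Suc (n + m + 1))" by (simp only:)
  also have "\<dots> = real (Suc (n + m + 1)) * fact (n + m + 1)" by (rule fact_Suc)
  finally show ?thesis by simp
qed

lemma C_nonneg: "C n m \<ge> 0" and W_nonneg: "W n m \<ge> 0"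
  by (simp_all add: C_def W_def)

lemma C_le: "C n m \<le> 1 / real (Suc n)"
proof -
  have "fact (Suc n) * fact m dvd (fact (Suc n + m) :: nat)" by (rule fact_fact_dvd_fact)
  hence "fact (Suc n) * fact m \<le> (fact (Suc n + m) :: nat)"
    by (intro dvd_imp_le) auto
  hence "real (fact (Suc n) * fact m) \<le> real (fact (Suc n + m))"
    by (simp only: of_nat_le_iff)
  hence "(fact (Suc n) * fact m :: real) \<le> fact (n + m + 1)"
    by (simp only: of_nat_mult of_nat_fact) simp
  hence *: "real (Suc n) * (fact n * fact m) \<le> fact (n + m + 1)"
    by (simp only: fact_Suc of_nat_mult mult.assoc)
  have "C n m = fact n * fact m / fact (n + m + 1)" by (simp add: C_def)
  also have "\<dots> \<le> fact n * fact m / (real (Suc n) * (fact n * fact m))"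
    by (rule divide_left_mono[OF *]) auto
  also have "\<dots> = 1 / real (Suc n)" by simp
  finally show ?thesis .
qed

lemma C_sym: "C n m = C m n"
  unfolding C_def by (simp add: ac_simps)

lemma C_le': "C n m \<le> 1 / real (Suc m)"
  using C_le[of m n] C_sym[of n m] by simp

lemma C_Suc_eq: "C (Suc n) m = (real n + 1) * fact n * fact m / ((real n + real m + 2) * fact (n + m + 1))"
proof -
  have a: "Suc n + m + 1 = n + m + 2" by simp
  have "C (Suc n) m = fact (Suc n) * fact m / fact (n + m + 2)"
    unfolding C_def a ..
  also have "\<dots> = (real n + 1) * fact n * fact m / ((real n + real m + 2) * fact (n + m + 1))"
    unfolding fact_n2 by (simp add: algebra_simps)
  finally show ?thesis .
qed

lemma W_eq: "W n m = fact n * fact m / ((real n + real m + 2) * fact (n + m + 1))"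
  unfolding W_def fact_n2 by simp

lemma aux_diff: "(F::real) > 0 \<Longrightarrow> p > 0 \<Longrightarrow> A / F - x * A / (p * F) = (p - x) * (A / (p * F))"
  by (simp add: field_simps)

lemma C_diff_n: "C n m - C (Suc n) m = real (Suc m) * W n m"
proof -
  define F where "F = (fact (n + m + 1) :: real)"
  define A where "A = (fact n * fact m :: real)"
  have F: "F > 0" unfolding F_def by simp
  have e1: "C n m = A / F" unfolding C_def F_def A_def by simp
  have e2: "C (Suc n) m = (real n + 1) * A / ((real n + real m + 2) * F)"
    unfolding C_Suc_eq F_def A_def by (simp add: mult.assoc)
  have e3: "W n m = A / ((real n + real m + 2) * F)"
    unfolding W_eq F_def A_def ..
  have p: "real n + real m + 2 > 0" by simp
  have "C n m - C (Suc n) m = ((real n + real m + 2) - (real n + 1)) * W n m"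
    unfolding e1 e2 e3 by (rule aux_diff[OF F p])
  also have "(real n + real m + 2) - (real n + 1) = real (Suc m)" by simp
  finally show ?thesis .
qed

lemma C_diff_m: "C n m - C n (Suc m) = real (Suc n) * W n m"
proof -
  have "W m n = W n m" unfolding W_def by (simp add: ac_simps)
  thus ?thesis using C_diff_n[of m n] C_sym[of n m] C_sym[of n "Suc m"] by simp
qed

lemma C_Suc_div: "C (Suc n) m / real (Suc n) = W n m"
proof -
  have "C (Suc n) m = real (Suc n) * (fact n * fact m / ((real n + real m + 2) * fact (n + m + 1)))"
    unfolding C_Suc_eq by simp
  hence "C (Suc n) m / real (Suc n) = fact n * fact m / ((real n + real m + 2) * fact (n + m + 1))"
    by (metis nonzero_mult_div_cancel_left of_nat_eq_0_iff nat.distinct(1))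
  thus ?thesis unfolding W_eq .
qed

lemma C_zero: "C n 0 = 1 / real (Suc n)" and C_zero': "C 0 m = 1 / real (Suc m)"
  by (simp_all add: C_def)


lemma inv_Suc_lim: "(\<lambda>m. 1 / real (Suc m)) \<longlonglongrightarrow> 0"
  using LIMSEQ_inverse_real_of_nat by (simp add: inverse_eq_divide)

lemma W_sums: "(\<lambda>m. W n m) sums (1 / real (Suc n) ^ 2)"
proof -
  have lim: "(\<lambda>m. C n m) \<longlonglongrightarrow> 0"
    by (rule tendsto_sandwich[OF _ _ tendsto_const inv_Suc_lim])
       (intro always_eventually allI C_nonneg C_le')+
  have "(\<lambda>m. C n m - C n (Suc m)) sums (C n 0 - 0)"
    by (rule telescope_sums'[OF lim])
  hence "(\<lambda>m. (C n m - C n (Suc m)) / real (Suc n)) sums ((C n 0 - 0) / real (Suc n))"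
    by (rule sums_divide)
  moreover have "(\<lambda>m. (C n m - C n (Suc m)) / real (Suc n)) = (\<lambda>m. W n m)"
    by (rule ext) (simp add: C_diff_m)
  moreover have "(C n 0 - 0) / real (Suc n) = 1 / real (Suc n) ^ 2"
    by (simp add: C_zero power2_eq_square)
  ultimately show ?thesis by simp
qed

lemma A_step:
  assumes S: "(\<lambda>n. ep k n * W n m) sums S"
  shows "(\<lambda>n. e k n * W n m) sums ((e k 0 / real (Suc m) + S) / real (Suc m))"
proof -
  define G where "G n = e k n * C n m" for n
  have lim: "G \<longlonglongrightarrow> 0"
  proof (rule tendsto_sandwich[OF _ _ tendsto_const e_div_lim[of k]])
    show "\<forall>\<^sub>F n in sequentially. 0 \<le> G n"
      unfolding G_def by (intro always_eventually allI mult_nonneg_nonneg e_nonneg C_nonneg)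
    show "\<forall>\<^sub>F n in sequentially. G n \<le> e k n / real (Suc n)"
    proof (intro always_eventually allI)
      fix n
      have "G n \<le> e k n * (1 / real (Suc n))"
        unfolding G_def by (intro mult_left_mono C_le e_nonneg)
      thus "G n \<le> e k n / real (Suc n)" by simp
    qed
  qed
  have "(\<lambda>n. G n - G (Suc n)) sums (G 0 - 0)"
    by (rule telescope_sums'[OF lim])
  moreover have "(\<lambda>n. G n - G (Suc n)) = (\<lambda>n. real (Suc m) * (e k n * W n m) - ep k n * W n m)"
  proof (rule ext)
    fix n
    have "G n - G (Suc n) = e k n * (C n m - C (Suc n) m) - ep k n * (C (Suc n) m / real (Suc n))"
      unfolding G_def e_Suc by (simp add: algebra_simps)
    also have "\<dots> = real (Suc m) * (e k n * W n m) - ep k n * W n m"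
      unfolding C_diff_n C_Suc_div by simp
    finally show "G n - G (Suc n) = real (Suc m) * (e k n * W n m) - ep k n * W n m" .
  qed
  moreover have "G 0 = e k 0 / real (Suc m)"
    unfolding G_def C_zero' by simp
  ultimately have tel: "(\<lambda>n. real (Suc m) * (e k n * W n m) - ep k n * W n m) sums (e k 0 / real (Suc m))"
    by simp
  have "(\<lambda>n. (real (Suc m) * (e k n * W n m) - ep k n * W n m) + ep k n * W n m) sums (e k 0 / real (Suc m) + S)"
    by (rule sums_add[OF tel S])
  hence "(\<lambda>n. real (Suc m) * (e k n * W n m)) sums (e k 0 / real (Suc m) + S)"
    by simp
  hence "(\<lambda>n. real (Suc m) * (e k n * W n m) / real (Suc m)) sums ((e k 0 / real (Suc m) + S) / real (Suc m))"
    by (rule sums_divide)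
  thus ?thesis by simp
qed

lemma A_sums: "(\<lambda>n. e k n * W n m) sums (1 / real (Suc m) ^ (k + 2))"
proof (induction k)
  case 0
  have "(\<lambda>n. ep 0 n * W n m) sums 0" by simp
  from A_step[OF this] show ?case by (simp add: power2_eq_square)
next
  case (Suc k)
  have "(\<lambda>n. ep (Suc k) n * W n m) sums (1 / real (Suc m) ^ (k + 2))" using Suc by simp
  from A_step[OF this] show ?case by (simp add: ac_simps)
qed

lemma zeta_sums: "s \<ge> 2 \<Longrightarrow> (\<lambda>m. 1 / real (Suc m) ^ s) sums zeta_int s"
proof -
  assume s: "s \<ge> 2"
  have "summable (\<lambda>m. inverse (real m ^ s))" by (rule inverse_power_summable[OF s])
  hence "summable (\<lambda>m. inverse (real (Suc m) ^ s))" by (subst summable_Suc_iff)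
  hence "summable (\<lambda>m. 1 / real (Suc m) ^ s)" by (simp add: inverse_eq_divide)
  thus ?thesis unfolding zeta_int_def by (rule summable_sums)
qed

lemma F_sums: "(\<lambda>n. e k n / real (Suc n) ^ 2) sums zeta_int (k + 2)"
proof -
  define f where "f p = e k (snd p) * W (snd p) (fst p)" for p
  define g where "g m = 1 / real (Suc m) ^ (k + 2)" for m
  have fnn: "f p \<ge> 0" for p unfolding f_def by (intro mult_nonneg_nonneg e_nonneg W_nonneg)
  have inner: "((\<lambda>n. f (m, n)) has_sum g m) UNIV" for m
    unfolding f_def g_def using A_sums[of k m]
    by (intro sums_nonneg_imp_has_sum) (auto intro: mult_nonneg_nonneg e_nonneg W_nonneg)
  have gs: "(g has_sum zeta_int (k + 2)) UNIV"
    unfolding g_def using zeta_sums[of "k+2"] by (intro sums_nonneg_imp_has_sum) auto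
  have sm: "f summable_on Sigma UNIV (\<lambda>_. UNIV)"
    by (rule summable_on_SigmaI[OF inner]) (use gs fnn in \<open>auto simp: summable_on_def\<close>)
  have hs: "(f has_sum zeta_int (k + 2)) (UNIV \<times> UNIV)"
    by (rule has_sum_SigmaI[OF inner gs sm])
  hence hs2: "((\<lambda>(x, y). f (y, x)) has_sum zeta_int (k + 2)) (UNIV \<times> UNIV)"
    by (subst (asm) has_sum_swap)
  have inner2: "((\<lambda>m. (\<lambda>(x, y). f (y, x)) (n, m)) has_sum (e k n / real (Suc n) ^ 2)) UNIV" for n
  proof -
    have "(\<lambda>m. e k n * W n m) sums (e k n * (1 / real (Suc n) ^ 2))"
      by (rule sums_mult[OF W_sums])
    hence "((\<lambda>m. e k n * W n m) has_sum (e k n * (1 / real (Suc n) ^ 2))) UNIV"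
      by (rule sums_nonneg_imp_has_sum) (intro mult_nonneg_nonneg e_nonneg W_nonneg)
    thus ?thesis unfolding f_def by simp
  qed
  have "((\<lambda>n. e k n / real (Suc n) ^ 2) has_sum zeta_int (k + 2)) UNIV"
    by (rule has_sum_SigmaD[OF hs2 inner2])
  thus ?thesis by (rule has_sum_imp_sums)
qed



lemma aux_A0: assumes "(x::real) \<noteq> 0" "y \<noteq> 0" "y = x + 1"
  shows "a / x - (a + b / x) / y = a / (x * y) - b / (x * y)"
proof -
  have "a / x - (a + b / x) / y = (a * y - a * x - b) / (x * y)"
    using assms(1,2) by (simp add: field_simps)
  also have "a * y - a * x - b = a - b" using assms(3) by (simp add: algebra_simps)
  finally show ?thesis by (simp add: diff_divide_distrib)
qed

lemma aux_T0: assumes "(x::real) \<noteq> 0" "y \<noteq> 0" "y = x + 1"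
  shows "a / x^2 - (a + b / x) / y^2
   = a / x^2 - a / y^2 - b / (x * y) + b / y^2"
proof -
  have "b / (x * y) - b / y^2 = (b * y - b * x) / (x * y^2)"
    using assms(1,2) by (simp add: field_simps power2_eq_square)
  also have "b * y - b * x = b" using assms(3) by (simp add: algebra_simps)
  finally have *: "b / (x * y) - b / y^2 = b / (x * y^2)" .
  have "(a + b / x) / y^2 = a / y^2 + b / (x * y^2)"
    using assms(1,2) by (simp add: add_divide_distrib)
  with * show ?thesis by simp
qed

lemma A'_step:
  assumes S: "(\<lambda>n. ep k n / (real (Suc n) * real (Suc (Suc n)))) sums S"
  shows "(\<lambda>n. e k n / (real (Suc n) * real (Suc (Suc n)))) sums (e k 0 + S)"
proof -
  define G where "G n = e k n / real (Suc n)" for n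
  have lim: "G \<longlonglongrightarrow> 0" unfolding G_def by (rule e_div_lim)
  have "(\<lambda>n. G n - G (Suc n)) sums (G 0 - 0)"
    by (rule telescope_sums'[OF lim])
  moreover have "(\<lambda>n. G n - G (Suc n)) = (\<lambda>n. e k n / (real (Suc n) * real (Suc (Suc n))) - ep k n / (real (Suc n) * real (Suc (Suc n))))"
  proof (rule ext)
    fix n
    have x: "real (Suc n) > 0" by simp
    have r: "real (Suc (Suc n)) = real (Suc n) + 1" by simp
    show "G n - G (Suc n) = e k n / (real (Suc n) * real (Suc (Suc n))) - ep k n / (real (Suc n) * real (Suc (Suc n)))"
      unfolding G_def e_Suc by (rule aux_A0) auto
  qed
  ultimately have tel: "(\<lambda>n. e k n / (real (Suc n) * real (Suc (Suc n))) - ep k n / (real (Suc n) * real (Suc (Suc n)))) sums (e k 0)"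
    by (simp add: G_def)
  from sums_add[OF tel S] show ?thesis by simp
qed

lemma A'_sums: "(\<lambda>n. e k n / (real (Suc n) * real (Suc (Suc n)))) sums 1"
proof (induction k)
  case 0
  have "(\<lambda>n. ep 0 n / (real (Suc n) * real (Suc (Suc n)))) sums 0" by simp
  from A'_step[OF this] show ?case by simp
next
  case (Suc k)
  have "(\<lambda>n. ep (Suc k) n / (real (Suc n) * real (Suc (Suc n)))) sums 1" using Suc by simp
  from A'_step[OF this] show ?case by simp
qed

definition Tval :: "nat \<Rightarrow> real" where
  "Tval k = (\<Sum>j=2..k+2. zeta_int j) - (real k + 1)"

lemma T_sums: "(\<lambda>n. e k n / real (Suc (Suc n)) ^ 2) sums Tval k"
proof (induction k)
  case 0
  have "(\<lambda>m. 1 / real (Suc m) ^ 2) sums zeta_int 2" by (rule zeta_sums) simp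
  hence "(\<lambda>m. 1 / real (Suc m) ^ 2) sums (zeta_int 2 - 1 + 1 / real (Suc 0) ^ 2)" by simp
  hence "(\<lambda>m. 1 / real (Suc (Suc m)) ^ 2) sums (zeta_int 2 - 1)"
    by (subst sums_Suc_iff)
  moreover have "Tval 0 = zeta_int 2 - 1"
  proof -
    have "{2..0+2::nat} = {2}" by auto
    thus ?thesis unfolding Tval_def by (simp add: numeral_2_eq_2)
  qed
  ultimately show ?case by simp
next
  case (Suc k)
  define G where "G n = e (Suc k) n / real (Suc n) ^ 2" for n
  have lim: "G \<longlonglongrightarrow> 0"
  proof (rule tendsto_sandwich[OF _ _ tendsto_const e_div_lim[of "Suc k"]])
    show "\<forall>\<^sub>F n in sequentially. 0 \<le> G n"
      unfolding G_def by (intro always_eventually allI divide_nonneg_nonneg e_nonneg) simp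
    show "\<forall>\<^sub>F n in sequentially. G n \<le> e (Suc k) n / real (Suc n)"
    proof (intro always_eventually allI)
      fix n
      have "real (Suc n) \<le> real (Suc n) ^ 2" by (simp add: power2_eq_square)
      thus "G n \<le> e (Suc k) n / real (Suc n)"
        unfolding G_def by (intro divide_left_mono e_nonneg) auto
    qed
  qed
  have tel0: "(\<lambda>n. G n - G (Suc n)) sums (G 0 - 0)"
    by (rule telescope_sums'[OF lim])
  define Fa where "Fa n = e (Suc k) n / real (Suc n) ^ 2" for n
  define Ta where "Ta n = e (Suc k) n / real (Suc (Suc n)) ^ 2" for n
  define Aa where "Aa n = e k n / (real (Suc n) * real (Suc (Suc n)))" for n
  define Tb where "Tb n = e k n / real (Suc (Suc n)) ^ 2" for n
  have "(\<lambda>n. G n - G (Suc n)) = (\<lambda>n. Fa n - Ta n - Aa n + Tb n)"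
  proof (rule ext)
    fix n
    have x: "real (Suc n) > 0" by simp
    have r: "real (Suc (Suc n)) = real (Suc n) + 1" by simp
    show "G n - G (Suc n) = Fa n - Ta n - Aa n + Tb n"
      unfolding G_def Fa_def Ta_def Aa_def Tb_def e_Suc[of "Suc k"] ep.simps by (rule aux_T0) auto
  qed
  with tel0 have tel: "(\<lambda>n. Fa n - Ta n - Aa n + Tb n) sums 0" by (simp add: G_def)
  have F: "Fa sums zeta_int (k + 3)" unfolding Fa_def using F_sums[of "Suc k"] by (simp add: numeral_3_eq_3)
  have A: "Aa sums 1" unfolding Aa_def by (rule A'_sums)
  have T: "Tb sums Tval k" unfolding Tb_def by (rule Suc.IH)
  have "(\<lambda>n. Fa n - Aa n + Tb n - (Fa n - Ta n - Aa n + Tb n)) sums (zeta_int (k + 3) - 1 + Tval k - 0)"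
    by (intro sums_diff sums_add F A T tel)
  hence "Ta sums (zeta_int (k + 3) - 1 + Tval k)" by simp
  moreover have "zeta_int (k + 3) - 1 + Tval k = Tval (Suc k)"
  proof -
    have "(\<Sum>j=2..Suc k+2. zeta_int j) = (\<Sum>j=2..k+2. zeta_int j) + zeta_int (k + 3)"
      by (simp add: numeral_3_eq_3)
    thus ?thesis unfolding Tval_def by (simp add: numeral_2_eq_2)
  qed
  ultimately show ?case unfolding Ta_def by simp
qed


lemma gen_harm_Suc: "gen_harm i (Suc n) = gen_harm i n + 1 / real (Suc n) ^ i"
  unfolding gen_harm_def by simp

lemma gen_harm_0: "gen_harm i 0 = 0"
  unfolding gen_harm_def by simp

lemma L_tel:
  fixes n :: nat
  defines "x \<equiv> 1 / real (Suc n)"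
  shows "(\<Sum>i=1..Suc k. (-1)^(i+1) * x^i * e (Suc k - i) (Suc n)) = x * e k n"
proof (induction k)
  case 0
  show ?case by simp
next
  case (Suc k)
  define f where "f i = (-1::real)^(i+1) * x^i * e (Suc (Suc k) - i) (Suc n)" for i
  have "(\<Sum>i=1..Suc (Suc k). f i) = f 1 + (\<Sum>i=Suc 1..Suc (Suc k). f i)"
    by (rule sum.atLeast_Suc_atMost) simp
  also have "(\<Sum>i=Suc 1..Suc (Suc k). f i) = (\<Sum>i=1..Suc k. f (Suc i))"
    by (rule sum.shift_bounds_cl_Suc_ivl)
  also have "\<dots> = (\<Sum>i=1..Suc k. - x * ((-1)^(i+1) * x^i * e (Suc k - i) (Suc n)))"
    by (rule sum.cong) (auto simp: f_def)
  also have "\<dots> = - x * (\<Sum>i=1..Suc k. (-1)^(i+1) * x^i * e (Suc k - i) (Suc n))"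
    by (rule sum_distrib_left[symmetric])
  also have "\<dots> = - x * (x * e k n)" using Suc by simp
  also have "f 1 = x * e (Suc k) n + x * (x * e k n)"
    unfolding f_def e_Suc by (simp add: x_def algebra_simps)
  finally have "(\<Sum>i=1..Suc (Suc k). f i) = x * e (Suc k) n" by simp
  thus ?case unfolding f_def .
qed

lemma EP_sum:
  "(\<Sum>i=1..Suc k. (-1::real)^(i+1) * gen_harm i n * ep (Suc k - i) n)
   = (\<Sum>i=1..k. (-1)^(i+1) * gen_harm i n * e (k - i) n)"
proof -
  have "(\<Sum>i=1..Suc k. (-1::real)^(i+1) * gen_harm i n * ep (Suc k - i) n)
     = (\<Sum>i=1..k. (-1::real)^(i+1) * gen_harm i n * ep (Suc k - i) n)"
    by simp
  also have "\<dots> = (\<Sum>i=1..k. (-1)^(i+1) * gen_harm i n * e (k - i) n)"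
    by (rule sum.cong) (auto simp: Suc_diff_le)
  finally show ?thesis .
qed

lemma newton_e: "real k * e k n = (\<Sum>i=1..k. (-1)^(i+1) * gen_harm i n * e (k - i) n)"
proof (induction n arbitrary: k)
  case 0
  show ?case by (cases k) (simp_all add: gen_harm_0)
next
  case (Suc n)
  show ?case
  proof (cases k)
    case 0 then show ?thesis by simp
  next
    case (Suc k')
    define x where "x = 1 / real (Suc n)"
    have alg: "s * P' * E' = s * P * E + x * (s * P * EP) + s * X * E'"
      if "P' = P + X" "E' = E + x * EP" for s P' P X E' E EP :: real
      using that by (simp add: algebra_simps)
    have pt: "(-1)^(i+1) * gen_harm i (Suc n) * e j (Suc n)
        = (-1)^(i+1) * gen_harm i n * e j n + x * ((-1)^(i+1) * gen_harm i n * ep j n)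
          + (-1)^(i+1) * x^i * e j (Suc n)" for i j
      by (rule alg) (simp_all add: gen_harm_Suc e_Suc x_def power_divide)
    have "(\<Sum>i=1..Suc k'. (-1)^(i+1) * gen_harm i (Suc n) * e (Suc k' - i) (Suc n))
        = (\<Sum>i=1..Suc k'. (-1)^(i+1) * gen_harm i n * e (Suc k' - i) n
             + x * ((-1::real)^(i+1) * gen_harm i n * ep (Suc k' - i) n)
             + (-1)^(i+1) * x^i * e (Suc k' - i) (Suc n))"
      by (rule sum.cong[OF refl pt])
    also have "\<dots> = (\<Sum>i=1..Suc k'. (-1)^(i+1) * gen_harm i n * e (Suc k' - i) n)
          + x * (\<Sum>i=1..Suc k'. (-1::real)^(i+1) * gen_harm i n * ep (Suc k' - i) n)
          + (\<Sum>i=1..Suc k'. (-1)^(i+1) * x^i * e (Suc k' - i) (Suc n))"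
      by (simp only: sum.distrib sum_distrib_left)
    also have "(\<Sum>i=1..Suc k'. (-1)^(i+1) * x^i * e (Suc k' - i) (Suc n)) = x * e k' n"
      unfolding x_def by (rule L_tel)
    also have "(\<Sum>i=1..Suc k'. (-1::real)^(i+1) * gen_harm i n * ep (Suc k' - i) n) = real k' * e k' n"
      unfolding EP_sum by (rule Suc.IH[symmetric])
    also have "(\<Sum>i=1..Suc k'. (-1)^(i+1) * gen_harm i n * e (Suc k' - i) n) = real (Suc k') * e (Suc k') n"
      by (rule Suc.IH[symmetric])
    finally have "(\<Sum>i=1..Suc k'. (-1)^(i+1) * gen_harm i (Suc n) * e (Suc k' - i) (Suc n))
        = real (Suc k') * (e (Suc k') n + x * e k' n)"
      by (simp add: algebra_simps)
    also have "e (Suc k') n + x * e k' n = e (Suc k') (Suc n)"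
      by (simp add: x_def)
    finally show ?thesis using Suc by simp
  qed
qed


definition cc :: "(nat \<Rightarrow> real) \<Rightarrow> nat \<Rightarrow> real" where
  "cc y i = (-1)^(i+1) * (y i / real i)"

definition tm :: "(nat \<Rightarrow> real) \<Rightarrow> nat \<Rightarrow> (nat \<Rightarrow> nat) \<Rightarrow> real" where
  "tm y N m = (\<Prod>i=1..N. cc y i ^ m i / fact (m i))"

lemma sign_eq: "(-1::real) ^ (\<Sum>i\<in>{i\<in>{1..n}. even i}. m i) = (\<Prod>i=1..n. ((-1::real)^(i+1))^(m i))"
proof -
  have "(-1::real) ^ (\<Sum>i\<in>{i\<in>{1..n}. even i}. m i) = (\<Prod>i\<in>{i\<in>{1..n}. even i}. (-1::real) ^ m i)"
    by (rule power_sum)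
  also have "\<dots> = (\<Prod>i=1..n. if even i then (-1::real) ^ m i else 1)"
    by (rule prod.inter_filter) simp
  also have "\<dots> = (\<Prod>i=1..n. ((-1::real)^(i+1))^(m i))"
    by (rule prod.cong) auto
  finally show ?thesis .
qed

lemma P_tm: "P_poly n y = (\<Sum>m\<in>partition_tuples n. tm y n m)"
  unfolding P_poly_def
proof (rule sum.cong[OF refl])
  fix m
  have "tm y n m = (\<Prod>i=1..n. ((-1::real)^(i+1))^(m i) * (y i / real i)^(m i) / fact (m i))"
    unfolding tm_def cc_def power_mult_distrib by (rule refl)
  also have "\<dots> = (\<Prod>i=1..n. ((-1::real)^(i+1))^(m i)) * (\<Prod>i=1..n. (y i / real i)^(m i)) / (\<Prod>i=1..n. fact (m i))"
    by (simp add: prod_dividef prod.distrib)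
  finally show "(-1) ^ (\<Sum>i\<in>{i\<in>{1..n}. even i}. m i) / (\<Prod>i=1..n. fact (m i)) * (\<Prod>i=1..n. (y i / real i) ^ m i) = tm y n m"
    unfolding sign_eq by simp
qed

lemma PT_finite: "finite (partition_tuples n)"
proof (rule finite_subset)
  show "partition_tuples n \<subseteq> {f. \<forall>x. (x \<in> {1..n} \<longrightarrow> f x \<in> {0..n}) \<and> (x \<notin> {1..n} \<longrightarrow> f x = 0)}"
  proof safe
    fix m x assume m: "m \<in> partition_tuples n" and x: "x \<in> {1..n}"
    have "m x \<le> x * m x" using x by simp
    also have "x * m x \<le> (\<Sum>i=1..n. i * m i)"
      by (rule member_le_sum) (use x in auto)
    also have "\<dots> = n" using m unfolding partition_tuples_def by simp
    finally show "m x \<in> {0..n}" by simp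
  next
    fix m x assume m: "m \<in> partition_tuples n" and x: "x \<notin> {1..n}"
    thus "m x = 0" unfolding partition_tuples_def by simp
  qed
  show "finite {f. \<forall>x. (x \<in> {1..n} \<longrightarrow> f x \<in> {0..n}) \<and> (x \<notin> {1..n} \<longrightarrow> (f x :: nat) = 0)}"
    by (rule finite_set_of_finite_funs) simp_all
qed

lemma sum_restrict:
  assumes "\<forall>i. i \<notin> {1..n} \<longrightarrow> m i = 0" "n \<le> N"
  shows "(\<Sum>i=1..N. i * m i) = (\<Sum>i=1..n. i * (m i :: nat))"
  by (rule sum.mono_neutral_right) (use assms in auto)

lemma tm_restrict:
  assumes "\<forall>i. i \<notin> {1..n} \<longrightarrow> m i = 0" "n \<le> N"
  shows "tm y N m = tm y n m"
  unfolding tm_def by (rule prod.mono_neutral_right) (use assms in auto)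

lemma PT_iff:
  assumes "n \<le> N"
  shows "m \<in> partition_tuples n \<longleftrightarrow> (\<forall>i. i \<notin> {1..N} \<longrightarrow> m i = 0) \<and> (\<Sum>i=1..N. i * m i) = n"
proof
  assume m: "m \<in> partition_tuples n"
  hence s: "\<forall>i. i \<notin> {1..n} \<longrightarrow> m i = 0" "(\<Sum>i=1..n. i * m i) = n"
    unfolding partition_tuples_def by auto
  show "(\<forall>i. i \<notin> {1..N} \<longrightarrow> m i = 0) \<and> (\<Sum>i=1..N. i * m i) = n"
    using s sum_restrict[OF s(1) assms] assms by auto
next
  assume h: "(\<forall>i. i \<notin> {1..N} \<longrightarrow> m i = 0) \<and> (\<Sum>i=1..N. i * m i) = n"
  have s: "\<forall>i. i \<notin> {1..n} \<longrightarrow> m i = 0"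
  proof (intro allI impI)
    fix i assume i: "i \<notin> {1..n}"
    show "m i = 0"
    proof (cases "i \<in> {1..N}")
      case True
      have "i * m i \<le> (\<Sum>i=1..N. i * m i)"
        by (rule member_le_sum) (use True in auto)
      hence "i * m i \<le> n" using h by simp
      moreover have "i > n" using i True by auto
      ultimately show ?thesis
      proof -
        assume a1: "i * m i \<le> n" and a2: "i > n"
        show ?thesis
        proof (rule ccontr)
          assume "m i \<noteq> 0"
          hence "i \<le> i * m i" by simp
          with a1 a2 show False by linarith
        qed
      qed
    next
      case False thus ?thesis using h by auto
    qed
  qed
  have "(\<Sum>i=1..n. i * m i) = n" using sum_restrict[OF s assms] h by simp
  with s show "m \<in> partition_tuples n" unfolding partition_tuples_def by simp
qed


lemma sum_upd:
  assumes "finite A" "i \<in> A"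
  shows "(\<Sum>j\<in>A. j * (m(i:=v)) j) + i * m i = (\<Sum>j\<in>A. j * m j) + i * (v::nat)"
proof -
  have r: "(\<Sum>j\<in>A - {i}. j * (m(i:=v)) j) = (\<Sum>j\<in>A - {i}. j * m j)"
    by (rule sum.cong) auto
  show ?thesis
    unfolding sum.remove[OF assms, of "\<lambda>j. j * (m(i:=v)) j"] sum.remove[OF assms, of "\<lambda>j. j * m j"] r
    by simp
qed

lemma tm_remove:
  assumes "i \<in> {1..N}"
  shows "tm y N m = cc y i ^ m i / fact (m i) * (\<Prod>j\<in>{1..N} - {i}. cc y j ^ m j / fact (m j))"
  unfolding tm_def by (rule prod.remove) (use assms in auto)

lemma tm_upd:
  assumes "i \<in> {1..N}"
  shows "real (Suc t) * tm y N (m(i := Suc t)) = cc y i * tm y N (m(i := t))"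
proof -
  have r: "(\<Prod>j\<in>{1..N} - {i}. cc y j ^ (m(i := v)) j / fact ((m(i := v)) j))
         = (\<Prod>j\<in>{1..N} - {i}. cc y j ^ m j / fact (m j))" for v
    by (rule prod.cong) auto
  have aux: "(a::real) \<noteq> 0 \<Longrightarrow> a * (c * p / (a * d)) = c * (p / d)" for a c p d
    by (cases "d = 0") (simp_all add: field_simps)
  have "real (Suc t) * (cc y i ^ Suc t / fact (Suc t)) = real (Suc t) * (cc y i * cc y i ^ t / (real (Suc t) * fact t))"
    by (simp only: fact_Suc power_Suc)
  also have "\<dots> = cc y i * (cc y i ^ t / fact t)"
    by (rule aux) simp
  finally have "real (Suc t) * (cc y i ^ Suc t / fact (Suc t)) = cc y i * (cc y i ^ t / fact t)" .
  thus ?thesis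
    unfolding tm_remove[OF assms, of y "m(i := Suc t)"] tm_remove[OF assms, of y "m(i := t)"] r
    by simp
qed

lemma per_i:
  assumes i: "i \<in> {1..k}"
  shows "(\<Sum>m\<in>partition_tuples k. real (i * m i) * tm y k m) = (-1)^(i+1) * y i * P_poly (k - i) y"
proof -
  define S where "S = {m \<in> partition_tuples k. m i \<noteq> 0}"
  have ik: "i \<le> k" "1 \<le> i" using i by auto
  have "(\<Sum>m\<in>partition_tuples k. real (i * m i) * tm y k m) = (\<Sum>m\<in>S. real (i * m i) * tm y k m)"
    unfolding S_def by (rule sum.mono_neutral_right[OF PT_finite]) auto
  also have "\<dots> = (\<Sum>m'\<in>partition_tuples (k - i). real i * cc y i * tm y k m')"
  proof (rule sum.reindex_bij_witness[where j = "\<lambda>m. m(i := m i - 1)" and i = "\<lambda>m'. m'(i := Suc (m' i))"])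
    fix m assume m: "m \<in> S"
    hence mi: "m i \<noteq> 0" unfolding S_def by simp
    show "(m(i := m i - 1))(i := Suc ((m(i := m i - 1)) i)) = m"
      using mi by (auto simp: fun_eq_iff)
    have mk: "(\<forall>j. j \<notin> {1..k} \<longrightarrow> m j = 0) \<and> (\<Sum>j=1..k. j * m j) = k"
      using m PT_iff[of k k] unfolding S_def by auto
    have u: "(\<Sum>j=1..k. j * (m(i := m i - 1)) j) + i * m i = (\<Sum>j=1..k. j * m j) + i * (m i - 1)"
      by (rule sum_upd) (use i in auto)
    have "i * (m i - 1) + i = i * m i" using mi by (cases "m i") auto
    hence "(\<Sum>j=1..k. j * (m(i := m i - 1)) j) = k - i" using u mk by linarith
    moreover have "\<forall>j. j \<notin> {1..k} \<longrightarrow> (m(i := m i - 1)) j = 0" using mk i by auto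
    ultimately show "m(i := m i - 1) \<in> partition_tuples (k - i)"
      using PT_iff[of "k - i" k] by simp
    obtain t where t: "m i = Suc t" using mi by (cases "m i") auto
    have mm: "m(i := Suc t) = m" using t by auto
    have "real (i * m i) * tm y k m = real i * (real (Suc t) * tm y k (m(i := Suc t)))"
      unfolding mm t by (simp add: algebra_simps)
    also have "\<dots> = real i * (cc y i * tm y k (m(i := t)))"
      by (subst tm_upd[OF i]) (rule refl)
    finally show "real i * cc y i * tm y k (m(i := m i - 1)) = real (i * m i) * tm y k m"
      using t by simp
  next
    fix m' assume m': "m' \<in> partition_tuples (k - i)"
    show "(m'(i := Suc (m' i)))(i := (m'(i := Suc (m' i))) i - 1) = m'"
      by (auto simp: fun_eq_iff)
    have mk: "(\<forall>j. j \<notin> {1..k} \<longrightarrow> m' j = 0) \<and> (\<Sum>j=1..k. j * m' j) = k - i"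
      using m' PT_iff[of "k - i" k] by auto
    have u: "(\<Sum>j=1..k. j * (m'(i := Suc (m' i))) j) + i * m' i = (\<Sum>j=1..k. j * m' j) + i * Suc (m' i)"
      by (rule sum_upd) (use i in auto)
    hence "(\<Sum>j=1..k. j * (m'(i := Suc (m' i))) j) = k" using mk ik by simp
    moreover have "\<forall>j. j \<notin> {1..k} \<longrightarrow> (m'(i := Suc (m' i))) j = 0" using mk i by auto
    ultimately show "m'(i := Suc (m' i)) \<in> S"
      using PT_iff[of k k] unfolding S_def by simp
  qed
  also have "\<dots> = real i * cc y i * (\<Sum>m'\<in>partition_tuples (k - i). tm y (k - i) m')"
  proof -
    have "(\<Sum>m'\<in>partition_tuples (k - i). real i * cc y i * tm y k m')
        = (\<Sum>m'\<in>partition_tuples (k - i). real i * cc y i * tm y (k - i) m')"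
    proof (rule sum.cong[OF refl])
      fix m' assume "m' \<in> partition_tuples (k - i)"
      hence "\<forall>j. j \<notin> {1..k - i} \<longrightarrow> m' j = 0" unfolding partition_tuples_def by simp
      thus "real i * cc y i * tm y k m' = real i * cc y i * tm y (k - i) m'"
        using tm_restrict[of "k - i" m' k y] by simp
    qed
    thus ?thesis by (simp add: sum_distrib_left)
  qed
  also have "\<dots> = (-1)^(i+1) * y i * P_poly (k - i) y"
    using ik unfolding P_tm cc_def by simp
  finally show ?thesis .
qed

lemma newton_P: "real k * P_poly k y = (\<Sum>i=1..k. (-1)^(i+1) * y i * P_poly (k - i) y)"
proof -
  have "real k * P_poly k y = (\<Sum>m\<in>partition_tuples k. real k * tm y k m)"
    unfolding P_tm by (simp add: sum_distrib_left)
  also have "\<dots> = (\<Sum>m\<in>partition_tuples k. \<Sum>i=1..k. real (i * m i) * tm y k m)"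
  proof (rule sum.cong[OF refl])
    fix m assume "m \<in> partition_tuples k"
    hence "(\<Sum>i=1..k. i * m i) = k" unfolding partition_tuples_def by simp
    hence "real k = (\<Sum>i=1..k. real (i * m i))" by (metis of_nat_sum)
    thus "real k * tm y k m = (\<Sum>i=1..k. real (i * m i) * tm y k m)"
      by (simp add: sum_distrib_right)
  qed
  also have "\<dots> = (\<Sum>i=1..k. \<Sum>m\<in>partition_tuples k. real (i * m i) * tm y k m)"
    by (rule sum.swap)
  also have "\<dots> = (\<Sum>i=1..k. (-1)^(i+1) * y i * P_poly (k - i) y)"
    by (rule sum.cong[OF refl]) (rule per_i)
  finally show ?thesis .
qed

lemma P_zero: "P_poly 0 y = 1"
proof -
  have "partition_tuples 0 = {\<lambda>_. 0}"
    unfolding partition_tuples_def by (auto simp: fun_eq_iff)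
  thus ?thesis unfolding P_poly_def by simp
qed

lemma P_eq_e: "P_poly k (\<lambda>i. gen_harm i n) = e k n"
proof (induction k rule: less_induct)
  case (less k)
  show ?case
  proof (cases k)
    case 0 thus ?thesis by (simp add: P_zero)
  next
    case (Suc k')
    have "real k * P_poly k (\<lambda>i. gen_harm i n) = (\<Sum>i=1..k. (-1)^(i+1) * gen_harm i n * P_poly (k - i) (\<lambda>i. gen_harm i n))"
      by (rule newton_P)
    also have "\<dots> = (\<Sum>i=1..k. (-1)^(i+1) * gen_harm i n * e (k - i) n)"
      by (rule sum.cong[OF refl]) (simp add: less.IH)
    also have "\<dots> = real k * e k n" by (rule newton_e[symmetric])
    finally show ?thesis using Suc by simp
  qed
qed


theorem mainTheorem20:
  fixes k :: nat
  assumes "k \<ge> 1"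
  shows "(\<lambda>n. P_poly k (\<lambda>i. gen_harm i (Suc n)) / (real (Suc n) + 2) ^ 2)
           sums ((\<Sum>j=2..k+2. zeta_int j) - (real k + 1))"
proof -
  define f where "f n = e k n / real (Suc (Suc n)) ^ 2" for n
  have f0: "f 0 = 0" unfolding f_def using assms by (cases k) auto
  have "f sums Tval k" unfolding f_def by (rule T_sums)
  hence "f sums (Tval k + f 0)" using f0 by simp
  hence "(\<lambda>n. f (Suc n)) sums Tval k" by (subst sums_Suc_iff)
  moreover have "(\<lambda>n. f (Suc n)) = (\<lambda>n. P_poly k (\<lambda>i. gen_harm i (Suc n)) / (real (Suc n) + 2) ^ 2)"
    by (rule ext) (simp add: f_def P_eq_e)
  ultimately show ?thesis unfolding Tval_def by simp
qed

end
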